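(* Let $n\ge 2$, let $u^o=(u^o_1,\dots,u^o_n)\in\mathbb{C}^n$ have pairwise distinct coordinates, let $\{u^o\}=\{u^o_1,\dots,u^o_n\}\subset\mathbb{C}_\lambda$, and let $L^o$ be a local system of finite rank on $\mathbb{C}_\lambda\setminus\{u^o\}$. Let $(M^o,\nabla^o)$ be the regular holonomic $\mathbb{C}[\lambda]\langle\partial_\lambda\rangle$-module corresponding to the intermediate extension $j_*L^o$ under the Riemann–Hilbert correspondence (with $j:\mathbb{C}_\lambda\setminus\{u^o\}\hookrightarrow\mathbb{C}_\lambda$), and let $(G^o,\nabla^o)$ be its localized Laplace transform. Fix a $u^o$-admissible argument $\theta^o$, and let $\Psi^o$, $\mathrm{T}_1,\dots,\mathrm{T}_n$ and the pair of Stokes matrices $(S^o_+,S^o_-)$ of $G^o$ be as described in the context. Then for $i\neq j\in\{1,\dots,n\}$, the blocks $(i,j)$ and $(j,i)$ of both $S^o_+$ and $S^o_-$ vanish if and only if \[ (\mathrm{id}-\mathrm{T}_j)|_{\mathrm{im}(\mathrm{id}-\mathrm{T}_i)}=0\quad\text{and}\quad(\mathrm{id}-\mathrm{T}_i)|_{\mathrm{im}(\mathrm{id}-\mathrm{T}_j)}=0. \]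
   Context: The Laplace transform of a $\mathbb{C}[\lambda]\langle\partial_\lambda\rangle$-module $M$ is the $\mathbb{C}[\zeta]\langle\partial_\zeta\rangle$-module equal to $M$ as a vector space, with $\zeta$ acting as $\partial_\lambda$ and $\partial_\zeta$ acting as $-\lambda$; the localized Laplace transform is its tensor product with $\mathbb{C}[\zeta,\zeta^{-1}]$ over $\mathbb{C}[\zeta]$, viewed as a meromorphic connection in the variable $z=\zeta^{-1}$ (irregular pole at $z=0$). Its formalization over $\mathbb{C}(\!(z)\!)$ decomposes into blocks indexed by $i=1,\dots,n$ (of the form $u^o_i\,\mathrm{id}\,\mathrm{d}(1/z)+C_i\,\mathrm{d}z/z$), and Stokes matrices are decomposed into corresponding blocks $(i,j)$. An argument $\theta^o$ is $u^o$-admissible if, for each $i$, the closed real half-line $\ell_i$ with direction $\theta^o$ starting at $u^o_i$ contains no $u^o_j$, $j\neq i$; set $\ell^o=\bigcup_i\ell_i$ and $\ell_i^*=\ell_i\setminus\{u^o_i\}$. Set $\Psi^o=H^2_c(\mathbb{C}_\lambda\setminus\ell^o,L^o)$ and $\Psi^o_i=H^1_c(\ell_i^*,L^o)$, the latter with monodromy $\mathrm{T}_{ii}$ induced by the monodromy of $L^o$ around $u^o_i$; there are natural isomorphisms $h_i:\Psi^o_i\to\Psi^o$, and $\mathrm{T}_i=h_i\mathrm{T}_{ii}h_i^{-1}$ is the $i$-th monodromy on $\Psi^o$. By a result of Malgrange (in the topological form of D'Agnolo–Hien–Morando–Sabbah), there is a pair $(S^o_+,S^o_-)$ of Stokes matrices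 of $G^o$ (with respect to $\theta^o$), with blocks indexed by $i,j$ where the $i$-th block space is $\phi^o_i=\mathrm{im}(\mathrm{id}-\mathrm{T}_i)\subset\Psi^o$, such that for $i\neq j$ the off-diagonal blocks $(i,j)$ and $(j,i)$ are respectively $\mathrm{c}_j\circ\mathrm{v}_i$ and $0$ for $S^o_+$, and $0$ and $-\mathrm{c}_i\circ\mathrm{v}_j$ for $S^o_-$, where $\mathrm{c}_k=(\mathrm{id}-\mathrm{T}_k):\Psi^o\to\phi^o_k$ and $\mathrm{v}_k:\phi^o_k\hookrightarrow\Psi^o$ is the inclusion. The claim concerns this representative $(S^o_+,S^o_-)$. *)

theory Defs
  imports "Jordan_Normal_Form.Matrix"
begin

text \<open>Linear-algebra skeleton of the Malgrange / DHMS representative of the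
Stokes matrices.  The space Psi is modelled as complex column vectors of
dimension N, the i-th monodromy T i as an N x N complex matrix.\<close>

definition cmap :: "(nat \<Rightarrow> complex mat) \<Rightarrow> nat \<Rightarrow> complex vec \<Rightarrow> complex vec" where
  "cmap T k x = x - T k *\<^sub>v x"

definition phi :: "nat \<Rightarrow> (nat \<Rightarrow> complex mat) \<Rightarrow> nat \<Rightarrow> complex vec set" where
  "phi N T k = cmap T k ` carrier_vec N"

definition vmap :: "complex vec \<Rightarrow> complex vec" where
  "vmap x = x"   \<comment> \<open>inclusion v_k : phi_k \<hookrightarrow> Psi\<close>

text \<open>Block (a,b) of a Stokes matrix is a map phi_a \<rightarrow> phi_b.  The order on the
indices induced by the admissible direction theta is given by a ranking rk:
index a comes before b iff rk a < rk b.  Diagonal blocks are irrelevant here and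
set to the identity.\<close>

definition stokes_plus :: "(nat \<Rightarrow> nat) \<Rightarrow> (nat \<Rightarrow> complex mat) \<Rightarrow> nat \<Rightarrow> nat \<Rightarrow> complex vec \<Rightarrow> complex vec" where
  "stokes_plus rk T a b x =
     (if a = b then x
      else if rk a < rk b then cmap T b (vmap x) else 0\<^sub>v (dim_vec x))"

definition stokes_minus :: "(nat \<Rightarrow> nat) \<Rightarrow> (nat \<Rightarrow> complex mat) \<Rightarrow> nat \<Rightarrow> nat \<Rightarrow> complex vec \<Rightarrow> complex vec" where
  "stokes_minus rk T a b x =
     (if a = b then x
      else if rk b < rk a then - cmap T b (vmap x) else 0\<^sub>v (dim_vec x))"

definition block_vanishes ::
  "nat \<Rightarrow> (nat \<Rightarrow> complex mat) \<Rightarrow> (nat \<Rightarrow> nat \<Rightarrow> complex vec \<Rightarrow> complex vec) \<Rightarrow> nat \<Rightarrow> nat \<Rightarrow> bool" where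
  "block_vanishes N T S a b = (\<forall>x \<in> phi N T a. S a b x = 0\<^sub>v N)"

end

theory Submission
  imports Defs
begin

lemma phi_dim: "T k \<in> carrier_mat N N \<Longrightarrow> x \<in> phi N T k \<Longrightarrow> dim_vec x = N"
proof -
  assume T: "T k \<in> carrier_mat N N" and x: "x \<in> phi N T k"
  then obtain y where y: "y \<in> carrier_vec N" and xy: "x = y - T k *\<^sub>v y"
    unfolding phi_def cmap_def by blast
  have "dim_vec (T k *\<^sub>v y) = N" using T by simp
  then show ?thesis using xy by simp
qed

lemma cmap_dim: "T k \<in> carrier_mat N N \<Longrightarrow> dim_vec x = N \<Longrightarrow> dim_vec (cmap T k x) = N"
  unfolding cmap_def by simp

lemma neg_zero: fixes v :: "complex vec" assumes "dim_vec v = N" shows "(- v = 0\<^sub>v N) = (v = 0\<^sub>v N)"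
proof -
  have "v \<in> carrier_vec N" using assms by (rule carrier_vecI)
  then show ?thesis by (rule uminus_zero_vec_eq)
qed


theorem corollary1p2:
  fixes n N :: nat and T :: "nat \<Rightarrow> complex mat" and rk :: "nat \<Rightarrow> nat" and i j :: nat
  assumes "n \<ge> 2"
    and "\<forall>k\<in>{1..n}. T k \<in> carrier_mat N N"
    and "inj_on rk {1..n}"
    and "i \<in> {1..n}" and "j \<in> {1..n}" and "i \<noteq> j"
  shows "(block_vanishes N T (stokes_plus rk T) i j \<and> block_vanishes N T (stokes_plus rk T) j i
          \<and> block_vanishes N T (stokes_minus rk T) i j \<and> block_vanishes N T (stokes_minus rk T) j i)
         \<longleftrightarrow> ((\<forall>x \<in> phi N T i. cmap T j x = 0\<^sub>v N) \<and> (\<forall>x \<in> phi N T j. cmap T i x = 0\<^sub>v N))"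
proof -
  have Ti: "T i \<in> carrier_mat N N" and Tj: "T j \<in> carrier_mat N N" using assms by auto
  have ne: "rk i \<noteq> rk j" using inj_onD[OF assms(3) _ assms(4) assms(5)] assms(6) by blast
  have di: "\<And>x. x \<in> phi N T i \<Longrightarrow> dim_vec x = N" using phi_dim[of T i N, OF Ti] by blast
  have dj: "\<And>x. x \<in> phi N T j \<Longrightarrow> dim_vec x = N" using phi_dim[of T j N, OF Tj] by blast
  have ci: "\<And>x. dim_vec x = N \<Longrightarrow> dim_vec (cmap T i x) = N" using cmap_dim[of T i N, OF Ti] .
  have cj: "\<And>x. dim_vec x = N \<Longrightarrow> dim_vec (cmap T j x) = N" using cmap_dim[of T j N, OF Tj] .
  have Pij: "\<And>x. x \<in> phi N T i \<Longrightarrow> stokes_plus rk T i j x = (if rk i < rk j then cmap T j x else 0\<^sub>v N)"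
    using assms(6) di unfolding stokes_plus_def vmap_def by simp
  have Pji: "\<And>x. x \<in> phi N T j \<Longrightarrow> stokes_plus rk T j i x = (if rk j < rk i then cmap T i x else 0\<^sub>v N)"
    using assms(6) dj unfolding stokes_plus_def vmap_def by simp
  have Mij: "\<And>x. x \<in> phi N T i \<Longrightarrow> (stokes_minus rk T i j x = 0\<^sub>v N) = (rk j < rk i \<longrightarrow> cmap T j x = 0\<^sub>v N)"
  proof -
    fix x assume x: "x \<in> phi N T i"
    have d: "dim_vec (cmap T j x) = N" using cj di x by blast
    show "?thesis x" using assms(6) di[OF x] neg_zero[OF d] unfolding stokes_minus_def vmap_def by simp
  qed
  have Mji: "\<And>x. x \<in> phi N T j \<Longrightarrow> (stokes_minus rk T j i x = 0\<^sub>v N) = (rk i < rk j \<longrightarrow> cmap T i x = 0\<^sub>v N)"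
  proof -
    fix x assume x: "x \<in> phi N T j"
    have d: "dim_vec (cmap T i x) = N" using ci dj x by blast
    show "?thesis x" using assms(6) dj[OF x] neg_zero[OF d] unfolding stokes_minus_def vmap_def by simp
  qed
  show ?thesis
  proof (cases "rk i < rk j")
    case True
    then show ?thesis unfolding block_vanishes_def using Pij Pji Mij Mji by simp
  next
    case False
    then have "rk j < rk i" using ne by simp
    then have "?thesis = (((\<forall>x \<in> phi N T j. cmap T i x = 0\<^sub>v N) \<and> (\<forall>x \<in> phi N T i. cmap T j x = 0\<^sub>v N))
         \<longleftrightarrow> ((\<forall>x \<in> phi N T i. cmap T j x = 0\<^sub>v N) \<and> (\<forall>x \<in> phi N T j. cmap T i x = 0\<^sub>v N)))"
      unfolding block_vanishes_def using Pij Pji Mij Mji by simp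
    then show ?thesis by (simp only: conj_commute)
  qed
qed

end
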